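(* Let $n$ be a power of two, $\Delta=50+1000\log n$ and $m=1000\Delta^2$. There exists a function $h:\{0,1\}^{\le 3\Delta}\to\{0,1,\dots,m-1\}$ such that for all $z\in\{0,1\}^{\le 3\Delta}$ and all $z'\neq z$ obtained from $z$ by at most two adjacent transpositions, or by at most two substitutions, or by at most one deletion and at most one insertion, we have $h(z)\neq h(z')$.
   Context: Logarithms are base $2$. $\{0,1\}^{\le k}$ is the set of binary strings of length at most $k$. An adjacent transposition swaps two consecutive coordinates; a substitution flips one bit; a deletion removes one coordinate; an insertion adds one bit at some position. *)

theory Defs
  imports Main
begin

definition adj_transp :: "bool list \<Rightarrow> bool list \<Rightarrow> bool" where
  "adj_transp xs ys \<longleftrightarrow>
     (\<exists>i. Suc i < length xs \<and> ys = xs[i := xs ! Suc i, Suc i := xs ! i])"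

definition subst1 :: "bool list \<Rightarrow> bool list \<Rightarrow> bool" where
  "subst1 xs ys \<longleftrightarrow> (\<exists>i < length xs. ys = xs[i := \<not> xs ! i])"

definition del1 :: "bool list \<Rightarrow> bool list \<Rightarrow> bool" where
  "del1 xs ys \<longleftrightarrow> (\<exists>i < length xs. ys = take i xs @ drop (Suc i) xs)"

definition ins1 :: "bool list \<Rightarrow> bool list \<Rightarrow> bool" where
  "ins1 xs ys \<longleftrightarrow> (\<exists>i \<le> length xs. \<exists>b. ys = take i xs @ b # drop i xs)"

definition close_edit :: "bool list \<Rightarrow> bool list \<Rightarrow> bool" where
  "close_edit z z' \<longleftrightarrow>
     (\<exists>k \<le> 2. (adj_transp ^^ k) z z') \<or>
     (\<exists>k \<le> 2. (subst1 ^^ k) z z') \<or>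
     (\<exists>w a b. a \<le> 1 \<and> b \<le> 1 \<and> (del1 ^^ a) z w \<and> (ins1 ^^ b) w z')"

end

theory Submission
  imports Defs
begin

lemma free_color:
  assumes "finite (A::nat set)"
  shows "\<exists>c \<le> card A. c \<notin> A"
proof (rule ccontr)
  assume "\<not> ?thesis"
  then have "{0..card A} \<subseteq> A" by auto
  then have "card {0..card A} \<le> card A" using assms by (rule card_mono[rotated])
  then show False by simp
qed

lemma greedy:
  assumes "finite S" "\<And>x. x \<in> S \<Longrightarrow> card {y\<in>S. y \<noteq> x \<and> (R x y \<or> R y x)} \<le> d"
  shows "\<exists>h::'a\<Rightarrow>nat. (\<forall>x\<in>S. h x \<le> d) \<and> (\<forall>x\<in>S. \<forall>y\<in>S. x \<noteq> y \<longrightarrow> R x y \<longrightarrow> h x \<noteq> h y)"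
  using assms
proof (induction S rule: finite_induct)
  case empty then show ?case by auto
next
  case (insert x S)
  have "card {y\<in>S. y \<noteq> u \<and> (R u y \<or> R y u)} \<le> d" if "u \<in> S" for u
  proof -
    have "card {y\<in>S. y \<noteq> u \<and> (R u y \<or> R y u)} \<le> card {y\<in>insert x S. y \<noteq> u \<and> (R u y \<or> R y u)}"
      by (rule card_mono) (use insert(1) in auto)
    also have "\<dots> \<le> d" using insert(4) that by auto
    finally show ?thesis .
  qed
  then obtain h where h: "\<forall>x\<in>S. h x \<le> d" "\<forall>x\<in>S. \<forall>y\<in>S. x \<noteq> y \<longrightarrow> R x y \<longrightarrow> h x \<noteq> h y"
    using insert(3) by blast
  let ?N = "{y\<in>S. R x y \<or> R y x}"
  have fin: "finite (h ` ?N)" using insert(1) by auto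
  have eqN: "?N = {y\<in>insert x S. y \<noteq> x \<and> (R x y \<or> R y x)}" using insert(2) by auto
  have "card (h ` ?N) \<le> card ?N" by (rule card_image_le) (use insert(1) in auto)
  also have "\<dots> \<le> d" using insert(4)[of x] eqN by simp
  finally have cardN: "card (h ` ?N) \<le> d" .
  obtain c where c: "c \<le> card (h ` ?N)" "c \<notin> h ` ?N" using free_color[OF fin] by blast
  define h' where "h' = h(x := c)"
  have "\<forall>u\<in>insert x S. h' u \<le> d" using h(1) c(1) cardN insert(2) by (auto simp: h'_def)
  moreover have "\<forall>u\<in>insert x S. \<forall>y\<in>insert x S. u \<noteq> y \<longrightarrow> R u y \<longrightarrow> h' u \<noteq> h' y"
    using h(2) c(2) insert(2) by (auto simp: h'_def)
  ultimately show ?case by blast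
qed

lemma rel2: "((R::'a\<Rightarrow>'a\<Rightarrow>bool) ^^ 2) x y \<longleftrightarrow> (\<exists>w. R x w \<and> R w y)"
  by (simp add: numeral_2_eq_2 relcompp_apply)

lemma rel1: "((R::'a\<Rightarrow>'a\<Rightarrow>bool) ^^ 1) x y \<longleftrightarrow> R x y"
  by (simp add: relcompp_apply)

lemma le2_cases: "(k::nat) \<le> 2 \<longleftrightarrow> k = 0 \<or> k = 1 \<or> k = 2" by auto

lemma adj_sym: "adj_transp x y \<Longrightarrow> adj_transp y x"
  unfolding adj_transp_def
proof (elim exE conjE)
  fix i assume i: "Suc i < length x" and y: "y = x[i := x ! Suc i, Suc i := x ! i]"
  show "\<exists>i. Suc i < length y \<and> x = y[i := y ! Suc i, Suc i := y ! i]"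
    by (rule exI[of _ i]) (use i y in \<open>auto simp: nth_list_update list_eq_iff_nth_eq\<close>)
qed

lemma subst_sym: "subst1 x y \<Longrightarrow> subst1 y x"
  unfolding subst1_def
proof (elim exE conjE)
  fix i assume i: "i < length x" and y: "y = x[i := \<not> x ! i]"
  show "\<exists>i<length y. x = y[i := \<not> y ! i]"
    by (rule exI[of _ i]) (use i y in \<open>auto simp: nth_list_update list_eq_iff_nth_eq\<close>)
qed

lemma del_ins: "del1 z w \<Longrightarrow> ins1 w z"
  unfolding del1_def ins1_def
proof (elim exE conjE)
  fix i assume i: "i < length z" and w: "w = take i z @ drop (Suc i) z"
  have "z = take i z @ z ! i # drop (Suc i) z" using i by (simp add: id_take_nth_drop)
  moreover have "take i w = take i z" "drop i w = drop (Suc i) z" using i w by auto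
  ultimately show "\<exists>i\<le>length w. \<exists>b. z = take i w @ b # drop i w" using i w
    by (intro exI[of _ i]) auto
qed

lemma ins_del: "ins1 w z \<Longrightarrow> del1 z w"
  unfolding del1_def ins1_def
proof (elim exE conjE)
  fix i b assume i: "i \<le> length w" and z: "z = take i w @ b # drop i w"
  show "\<exists>i<length z. w = take i z @ drop (Suc i) z"
    using i z by (intro exI[of _ i]) (auto simp: min_def)
qed

lemma sym_pow:
  fixes R :: "'a \<Rightarrow> 'a \<Rightarrow> bool"
  assumes "\<And>a b. R a b \<Longrightarrow> R b a" "\<exists>k\<le>2. (R ^^ k) x y"
  shows "\<exists>k\<le>2. (R ^^ k) y x"
proof -
  obtain k where k: "k \<le> 2" "(R ^^ k) x y" using assms(2) by blast
  then consider "k = 0" | "k = 1" | "k = 2" by linarith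
  then show ?thesis
  proof cases
    case 1 then show ?thesis using k by (intro exI[of _ 0]) auto
  next
    case 2 then show ?thesis using k assms(1) by (intro exI[of _ 1]) (auto simp: rel1)
  next
    case 3 then show ?thesis using k assms(1) by (intro exI[of _ 2]) (auto simp: rel2)
  qed
qed

lemma di_sym:
  assumes "\<exists>w a b. a \<le> (1::nat) \<and> b \<le> (1::nat) \<and> (del1 ^^ a) z w \<and> (ins1 ^^ b) w z'"
  shows "\<exists>w a b. a \<le> (1::nat) \<and> b \<le> (1::nat) \<and> (del1 ^^ a) z' w \<and> (ins1 ^^ b) w z"
proof -
  obtain w a b where h: "a \<le> 1" "b \<le> 1" "(del1 ^^ a) z w" "(ins1 ^^ b) w z'" using assms by blast
  have a: "a = 0 \<or> a = 1" and b: "b = 0 \<or> b = 1" using h by auto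
  show ?thesis
  proof (cases "a = 0")
    case True
    show ?thesis
    proof (cases "b = 0")
      case True
      then show ?thesis using h \<open>a = 0\<close> by (intro exI[of _ z] exI[of _ 0]) auto
    next
      case False
      then have "b = 1" using b by simp
      then show ?thesis using h \<open>a = 0\<close> ins_del by (intro exI[of _ z] exI[of _ 1] exI[of _ 0]) (auto simp: rel1)
    qed
  next
    case False
    then have a1: "a = 1" using a by simp
    show ?thesis
    proof (cases "b = 0")
      case True
      then show ?thesis using h a1 del_ins by (intro exI[of _ z'] exI[of _ 0] exI[of _ 1]) (auto simp: rel1)
    next
      case False
      then have "b = 1" using b by simp
      then show ?thesis using h a1 del_ins ins_del by (intro exI[of _ w] exI[of _ 1] exI[of _ 1]) (auto simp: rel1)
    qed
  qed
qed

lemma close_sym: "close_edit z z' \<Longrightarrow> close_edit z' z"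
  unfolding close_edit_def
  using sym_pow[of adj_transp, OF adj_sym] sym_pow[of subst1, OF subst_sym] di_sym by blast

lemma card_UN_bound:
  assumes "finite I" "\<And>i. i \<in> I \<Longrightarrow> finite (A i) \<and> card (A i) \<le> c"
  shows "finite (\<Union>i\<in>I. A i) \<and> card (\<Union>i\<in>I. A i) \<le> card I * c"
proof
  show "finite (\<Union>i\<in>I. A i)" using assms by auto
  have "card (\<Union>i\<in>I. A i) \<le> (\<Sum>i\<in>I. card (A i))" by (rule card_UN_le[OF assms(1)])
  also have "\<dots> \<le> card I * c" using sum_bounded_above[of I "\<lambda>i. card (A i)" c] assms(2) by auto
  finally show "card (\<Union>i\<in>I. A i) \<le> card I * c" .
qed

lemma adj_card: "finite {y. adj_transp z y} \<and> card {y. adj_transp z y} \<le> length z"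
proof -
  have sub: "{y. adj_transp z y} \<subseteq> (\<lambda>i. z[i := z ! Suc i, Suc i := z ! i]) ` {..<length z}"
    unfolding adj_transp_def by auto
  have "card {y. adj_transp z y} \<le> card ((\<lambda>i. z[i := z ! Suc i, Suc i := z ! i]) ` {..<length z})"
    by (rule card_mono[OF _ sub]) auto
  also have "\<dots> \<le> length z" using card_image_le[of "{..<length z}"] by fastforce
  finally show ?thesis using finite_subset[OF sub] by auto
qed

lemma adj_len: "adj_transp z y \<Longrightarrow> length y = length z"
  unfolding adj_transp_def by auto

lemma subst_card: "finite {y. subst1 z y} \<and> card {y. subst1 z y} \<le> length z"
proof -
  have sub: "{y. subst1 z y} \<subseteq> (\<lambda>i. z[i := \<not> z ! i]) ` {..<length z}"
    unfolding subst1_def by auto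
  have "card {y. subst1 z y} \<le> card ((\<lambda>i. z[i := \<not> z ! i]) ` {..<length z})"
    by (rule card_mono[OF _ sub]) auto
  also have "\<dots> \<le> length z" using card_image_le[of "{..<length z}"] by fastforce
  finally show ?thesis using finite_subset[OF sub] by auto
qed

lemma subst_len: "subst1 z y \<Longrightarrow> length y = length z"
  unfolding subst1_def by auto

lemma del_card: "finite {y. del1 z y} \<and> card {y. del1 z y} \<le> length z"
proof -
  have sub: "{y. del1 z y} \<subseteq> (\<lambda>i. take i z @ drop (Suc i) z) ` {..<length z}"
    unfolding del1_def by auto
  have "card {y. del1 z y} \<le> card ((\<lambda>i. take i z @ drop (Suc i) z) ` {..<length z})"
    by (rule card_mono[OF _ sub]) auto
  also have "\<dots> \<le> length z" using card_image_le[of "{..<length z}"] by fastforce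
  finally show ?thesis using finite_subset[OF sub] by auto
qed

lemma del_len: "del1 z y \<Longrightarrow> length y \<le> length z"
  unfolding del1_def by auto

lemma ins_card: "finite {y. ins1 z y} \<and> card {y. ins1 z y} \<le> 2 * (length z + 1)"
proof -
  have sub: "{y. ins1 z y} \<subseteq> (\<lambda>(i,b). take i z @ b # drop i z) ` ({..length z} \<times> UNIV)"
    unfolding ins1_def by auto
  have fin: "finite ({..length z} \<times> (UNIV::bool set))" by auto
  have "card {y. ins1 z y} \<le> card ((\<lambda>(i,b). take i z @ b # drop i z) ` ({..length z} \<times> (UNIV::bool set)))"
    by (rule card_mono[OF _ sub]) (use fin in auto)
  also have "\<dots> \<le> card ({..length z} \<times> (UNIV::bool set))" by (rule card_image_le[OF fin])
  also have "\<dots> = 2 * (length z + 1)" by (simp add: card_cartesian_product card_UNIV_bool)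
  finally show ?thesis using finite_subset[OF sub] fin by auto
qed

lemma pow_card:
  fixes R :: "bool list \<Rightarrow> bool list \<Rightarrow> bool"
  assumes len: "\<And>a b. R a b \<Longrightarrow> length b = length a"
    and cd: "\<And>a. finite {y. R a y} \<and> card {y. R a y} \<le> length a"
  shows "finite {y. \<exists>k\<le>2. (R ^^ k) z y} \<and> card {y. \<exists>k\<le>2. (R ^^ k) z y} \<le> 1 + length z + length z * length z"
proof -
  let ?l = "length z"
  have eq: "{y. \<exists>k\<le>2. (R ^^ k) z y} = insert z ({y. R z y} \<union> (\<Union>w\<in>{y. R z y}. {y. R w y}))"
  proof (rule set_eqI, rule iffI)
    fix y assume "y \<in> {y. \<exists>k\<le>2. (R ^^ k) z y}"
    then obtain k where k: "k \<le> 2" "(R ^^ k) z y" by auto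
    then consider "k = 0" | "k = 1" | "k = 2" by linarith
    then show "y \<in> insert z ({y. R z y} \<union> (\<Union>w\<in>{y. R z y}. {y. R w y}))"
      by cases (use k in \<open>auto simp: rel1 rel2\<close>)
  next
    fix y assume "y \<in> insert z ({y. R z y} \<union> (\<Union>w\<in>{y. R z y}. {y. R w y}))"
    then consider "y = z" | "R z y" | "\<exists>w. R z w \<and> R w y" by auto
    then show "y \<in> {y. \<exists>k\<le>2. (R ^^ k) z y}"
    proof cases
      case 1 then show ?thesis by (auto intro: exI[of _ 0])
    next
      case 2 then show ?thesis by (auto intro!: exI[of _ 1] simp: rel1)
    next
      case 3 then show ?thesis by (auto intro!: exI[of _ 2] simp: rel2)
    qed
  qed
  have U: "finite (\<Union>w\<in>{y. R z y}. {y. R w y}) \<and> card (\<Union>w\<in>{y. R z y}. {y. R w y}) \<le> card {y. R z y} * ?l"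
  proof (rule card_UN_bound)
    show "finite {y. R z y}" using cd by auto
  next
    fix w assume "w \<in> {y. R z y}"
    then have "length w = ?l" using len by auto
    then show "finite {y. R w y} \<and> card {y. R w y} \<le> ?l" using cd[of w] by auto
  qed
  have c1: "card {y. R z y} \<le> ?l" "finite {y. R z y}" using cd by auto
  have "card ({y. R z y} \<union> (\<Union>w\<in>{y. R z y}. {y. R w y})) \<le> card {y. R z y} + card (\<Union>w\<in>{y. R z y}. {y. R w y})"
    by (rule card_Un_le)
  also have "\<dots> \<le> ?l + ?l * ?l" using U c1 mult_le_mono1[OF c1(1), of ?l] by linarith
  finally have "card ({y. R z y} \<union> (\<Union>w\<in>{y. R z y}. {y. R w y})) \<le> ?l + ?l * ?l" .
  then show ?thesis unfolding eq using U c1 card_insert_le_m1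
    by (auto simp: card_insert_if)
qed

lemma di_card:
  "finite {z'. \<exists>w a b. a \<le> (1::nat) \<and> b \<le> (1::nat) \<and> (del1 ^^ a) z w \<and> (ins1 ^^ b) w z'} \<and>
   card {z'. \<exists>w a b. a \<le> (1::nat) \<and> b \<le> (1::nat) \<and> (del1 ^^ a) z w \<and> (ins1 ^^ b) w z'}
     \<le> (length z + 1) * (2 * length z + 3)"
proof -
  let ?l = "length z"
  let ?I = "insert z {w. del1 z w}"
  have sub: "{z'. \<exists>w a b. a \<le> (1::nat) \<and> b \<le> (1::nat) \<and> (del1 ^^ a) z w \<and> (ins1 ^^ b) w z'}
     \<subseteq> (\<Union>w\<in>?I. insert w {y. ins1 w y})"
  proof
    fix y assume "y \<in> {z'. \<exists>w a b. a \<le> (1::nat) \<and> b \<le> (1::nat) \<and> (del1 ^^ a) z w \<and> (ins1 ^^ b) w z'}"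
    then obtain w a b where h: "a \<le> (1::nat)" "b \<le> (1::nat)" "(del1 ^^ a) z w" "(ins1 ^^ b) w y" by auto
    have "w \<in> ?I" using h(1,3) by (cases a) (auto simp: rel1)
    moreover have "y \<in> insert w {y. ins1 w y}" using h(2,4) by (cases b) (auto simp: rel1)
    ultimately show "y \<in> (\<Union>w\<in>?I. insert w {y. ins1 w y})" by blast
  qed
  have fI: "finite ?I" "card ?I \<le> ?l + 1" using del_card[of z] card_insert_le_m1
    by (auto simp: card_insert_if)
  have U: "finite (\<Union>w\<in>?I. insert w {y. ins1 w y}) \<and> card (\<Union>w\<in>?I. insert w {y. ins1 w y}) \<le> card ?I * (2 * ?l + 3)"
  proof (rule card_UN_bound[OF fI(1)])
    fix w assume "w \<in> ?I"
    then have lw: "length w \<le> ?l" using del_len by auto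
    have "card (insert w {y. ins1 w y}) \<le> Suc (card {y. ins1 w y})" using ins_card[of w] by (simp add: card_insert_if)
    also have "\<dots> \<le> 2 * ?l + 3" using conjunct2[OF ins_card[of w]] lw by simp
    finally show "finite (insert w {y. ins1 w y}) \<and> card (insert w {y. ins1 w y}) \<le> 2 * ?l + 3"
      using ins_card[of w] by auto
  qed
  have "card (\<Union>w\<in>?I. insert w {y. ins1 w y}) \<le> (?l + 1) * (2 * ?l + 3)"
    using U mult_le_mono1[OF fI(2), of "2 * ?l + 3"] by linarith
  then show ?thesis using U finite_subset[OF sub] card_mono[OF _ sub] by (meson le_trans)
qed

lemma close_card:
  "finite {y. close_edit z y} \<and>
   card {y. close_edit z y} \<le> 2 * (1 + length z + length z * length z) + (length z + 1) * (2 * length z + 3)"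
proof -
  let ?A = "{y. \<exists>k\<le>2. (adj_transp ^^ k) z y}"
  let ?B = "{y. \<exists>k\<le>2. (subst1 ^^ k) z y}"
  let ?C = "{z'. \<exists>w a b. a \<le> (1::nat) \<and> b \<le> (1::nat) \<and> (del1 ^^ a) z w \<and> (ins1 ^^ b) w z'}"
  have eq: "{y. close_edit z y} = ?A \<union> ?B \<union> ?C" unfolding close_edit_def by auto
  have A: "finite ?A \<and> card ?A \<le> 1 + length z + length z * length z"
    by (rule pow_card) (use adj_len adj_card in auto)
  have B: "finite ?B \<and> card ?B \<le> 1 + length z + length z * length z"
    by (rule pow_card) (use subst_len subst_card in auto)
  have C: "finite ?C \<and> card ?C \<le> (length z + 1) * (2 * length z + 3)" by (rule di_card)
  have "card (?A \<union> ?B \<union> ?C) \<le> card ?A + card ?B + card ?C"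
    by (meson add_le_mono card_Un_le le_trans order_refl)
  then show ?thesis unfolding eq using A B C by auto
qed

theorem lemma7:
  fixes n k :: nat
  assumes "n = 2 ^ k"
  shows "let \<Delta> = 50 + 1000 * k; m = 1000 * \<Delta>\<^sup>2 in
    \<exists>h :: bool list \<Rightarrow> nat.
      (\<forall>z. length z \<le> 3 * \<Delta> \<longrightarrow> h z < m) \<and>
      (\<forall>z z'. length z \<le> 3 * \<Delta> \<longrightarrow> length z' \<le> 3 * \<Delta> \<longrightarrow> z' \<noteq> z \<longrightarrow>
         close_edit z z' \<longrightarrow> h z \<noteq> h z')"
proof -
  define D :: nat where "D = 50 + 1000 * k"
  define L where "L = 3 * D"
  define d where "d = 2 * (1 + L + L * L) + (L + 1) * (2 * L + 3)"
  define S where "S = {z :: bool list. length z \<le> L}"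
  have finS: "finite S"
  proof -
    have "S = {xs. set xs \<subseteq> (UNIV::bool set) \<and> length xs \<le> L}" unfolding S_def by auto
    then show ?thesis using finite_lists_length_le[of "UNIV::bool set" L] by simp
  qed
  have deg: "card {y\<in>S. y \<noteq> x \<and> (close_edit x y \<or> close_edit y x)} \<le> d" if "x \<in> S" for x
  proof -
    let ?l = "length x"
    have l: "?l \<le> L" using that S_def by auto
    have sub: "{y\<in>S. y \<noteq> x \<and> (close_edit x y \<or> close_edit y x)} \<subseteq> {y. close_edit x y}"
      using close_sym by auto
    have "card {y\<in>S. y \<noteq> x \<and> (close_edit x y \<or> close_edit y x)} \<le> card {y. close_edit x y}"
      using close_card[of x] card_mono[OF _ sub] by auto
    also have "\<dots> \<le> 2 * (1 + ?l + ?l * ?l) + (?l + 1) * (2 * ?l + 3)" using close_card[of x] by auto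
    also have "\<dots> \<le> d" unfolding d_def
      by (intro add_le_mono mult_le_mono l order_refl)
    finally show ?thesis .
  qed
  obtain h where h: "\<forall>x\<in>S. h x \<le> d" "\<forall>x\<in>S. \<forall>y\<in>S. x \<noteq> y \<longrightarrow> close_edit x y \<longrightarrow> h x \<noteq> h y"
    using greedy[OF finS deg] by blast
  have D50: "50 \<le> D" using D_def by simp
  have D1: "50 * D \<le> D * D" using mult_le_mono1[OF D50, of D] by simp
  have "d = 36 * (D * D) + 21 * D + 5" unfolding d_def L_def by (simp add: algebra_simps)
  also have "\<dots> < 1000 * D\<^sup>2" unfolding power2_eq_square using D1 D50 by linarith
  finally have dm: "d < 1000 * D\<^sup>2" .
  show ?thesis unfolding Let_def D_def[symmetric] L_def[symmetric]
    using h dm unfolding S_def by (intro exI[of _ h]) fastforce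
qed

end
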